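(* Let $s\in[-\infty,0]$, let $\rho$ be a $2\times2$ density matrix and $X,Y$ be $2\times2$ Hermitian matrices. Define $\mathcal{I}_\rho^s(X,Y)=I^s(\rho,X)I^s(\rho,Y)-\frac1{16}\left[I^s(\rho,X+Y)-I^s(\rho,X-Y)\right]^2.$ Then $0\le\mathcal{I}_\rho^s(X,Y)\le\frac14\left|\mathrm{Tr}\big[\rho[X,Y]\big]\right|^2$.
   Context: Write $\rho=\sum_{i=1}^2\lambda_i|\psi_i\rangle\langle\psi_i|$ (orthonormal eigenbasis, $\lambda_1\ge\lambda_2\ge0$). For $-\infty<s<0$ and $a_1,a_2>0$ let $m_s(a_1,a_2)=\left(\frac{a_1^s+a_2^s}{2}\right)^{1/s}$; $m_0(a_1,a_2)=\sqrt{a_1a_2}$; $m_{-\infty}(a_1,a_2)=\min\{a_1,a_2\}$; and $m_s(a,0)=m_s(0,a)=m_s(0,0)=0$. Define $\zeta_\rho^s(X,Y)=\mathrm{Tr}[\rho X^\dagger Y]-\sum_{i,j} m_s(\lambda_i,\lambda_j)\langle\psi_i|X^\dagger|\psi_j\rangle\langle\psi_j|Y|\psi_i\rangle$ and $I^s(\rho,X)=\zeta_\rho^s(X,X)$. $[X,Y]=XY-YX$. *)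

theory Defs
  imports "HOL-Analysis.Analysis"
begin

type_synonym cmat2 = "complex^2^2"
type_synonym cvec2 = "complex^2"

definition cadj :: "cmat2 \<Rightarrow> cmat2" where
  "cadj A = (\<chi> i j. cnj (A $ j $ i))"

definition mtrace :: "cmat2 \<Rightarrow> complex" where
  "mtrace A = (\<Sum>i\<in>UNIV. A $ i $ i)"

definition braket :: "cvec2 \<Rightarrow> cvec2 \<Rightarrow> complex" where
  "braket u v = (\<Sum>i\<in>UNIV. cnj (u $ i) * v $ i)"

definition hermitian :: "cmat2 \<Rightarrow> bool" where
  "hermitian A \<longleftrightarrow> cadj A = A"

definition psd :: "cmat2 \<Rightarrow> bool" where
  "psd A \<longleftrightarrow> hermitian A \<and> (\<forall>v. 0 \<le> Re (braket v (A *v v)))"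

definition density_matrix :: "cmat2 \<Rightarrow> bool" where
  "density_matrix \<rho> \<longleftrightarrow> psd \<rho> \<and> mtrace \<rho> = 1"

definition commutator :: "cmat2 \<Rightarrow> cmat2 \<Rightarrow> cmat2" where
  "commutator X Y = X ** Y - Y ** X"

definition eig_decomp :: "cmat2 \<Rightarrow> real \<Rightarrow> real \<Rightarrow> cvec2 \<Rightarrow> cvec2 \<Rightarrow> bool" where
  "eig_decomp \<rho> l1 l2 p1 p2 \<longleftrightarrow>
     braket p1 p1 = 1 \<and> braket p2 p2 = 1 \<and> braket p1 p2 = 0 \<and>
     \<rho> *v p1 = complex_of_real l1 *s p1 \<and> \<rho> *v p2 = complex_of_real l2 *s p2 \<and>
     l1 \<ge> l2 \<and> l2 \<ge> 0"

definition pmean :: "ereal \<Rightarrow> real \<Rightarrow> real \<Rightarrow> real" where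
  "pmean s a b =
     (if a = 0 \<or> b = 0 then 0
      else if s = -\<infinity> then min a b
      else if s = 0 then sqrt (a * b)
      else ((a powr real_of_ereal s + b powr real_of_ereal s) / 2) powr (1 / real_of_ereal s))"

definition zeta :: "ereal \<Rightarrow> cmat2 \<Rightarrow> real \<Rightarrow> real \<Rightarrow> cvec2 \<Rightarrow> cvec2 \<Rightarrow> cmat2 \<Rightarrow> cmat2 \<Rightarrow> complex" where
  "zeta s \<rho> l1 l2 p1 p2 X Y =
     (let l = (\<lambda>i::nat. if i = 1 then l1 else l2);
          p = (\<lambda>i::nat. if i = 1 then p1 else p2)
      in mtrace (\<rho> ** cadj X ** Y)
         - (\<Sum>i\<in>{1,2}. \<Sum>j\<in>{1,2}. complex_of_real (pmean s (l i) (l j))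
              * braket (p i) (cadj X *v p j) * braket (p j) (Y *v p i)))"

definition Iinfo :: "ereal \<Rightarrow> cmat2 \<Rightarrow> real \<Rightarrow> real \<Rightarrow> cvec2 \<Rightarrow> cvec2 \<Rightarrow> cmat2 \<Rightarrow> complex" where
  "Iinfo s \<rho> l1 l2 p1 p2 X = zeta s \<rho> l1 l2 p1 p2 X X"

definition calI :: "ereal \<Rightarrow> cmat2 \<Rightarrow> real \<Rightarrow> real \<Rightarrow> cvec2 \<Rightarrow> cvec2 \<Rightarrow> cmat2 \<Rightarrow> cmat2 \<Rightarrow> complex" where
  "calI s \<rho> l1 l2 p1 p2 X Y =
     Iinfo s \<rho> l1 l2 p1 p2 X * Iinfo s \<rho> l1 l2 p1 p2 Y
     - (1/16) * (Iinfo s \<rho> l1 l2 p1 p2 (X + Y) - Iinfo s \<rho> l1 l2 p1 p2 (X - Y))\<^sup>2"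

end

theory Submission
  imports Defs
begin


lemma braket_add: "braket u (v + w) = braket u v + braket u w"
  by (simp add: braket_def sum_2 algebra_simps)
lemma braket_diff: "braket u (v - w) = braket u v - braket u w"
  by (simp add: braket_def sum_2 algebra_simps)
lemma braket_smult: "braket u (c *s v) = c * braket u v"
  by (simp add: braket_def sum_2 algebra_simps)
lemma braket_cnj: "braket v u = cnj (braket u v)"
  by (simp add: braket_def sum_2 algebra_simps)
lemma braket_adj: "braket u (A *v v) = braket (cadj A *v u) v"
  by (simp add: braket_def cadj_def matrix_vector_mult_def sum_2 algebra_simps)
lemma cadj_add: "cadj (A + B) = cadj A + cadj B"
  by (simp add: cadj_def vec_eq_iff)
lemma cadj_diff: "cadj (A - B) = cadj A - cadj B"
  by (simp add: cadj_def vec_eq_iff)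

lemma complete:
  assumes "braket p1 p1 = 1" "braket p2 p2 = 1" "braket p1 p2 = 0"
  shows "v = braket p1 v *s p1 + braket p2 v *s p2"
proof -
  define U :: cmat2 where "U = (\<chi> i j. if j = 1 then p1 $ i else p2 $ i)"
  have h21: "braket p2 p1 = 0" using assms(3) braket_cnj by (metis complex_cnj_zero)
  have "cadj U ** U = mat 1"
    using assms h21 unfolding vec_eq_iff
    by (auto simp: U_def cadj_def matrix_matrix_mult_def mat_def sum_2 braket_def forall_2)
  hence UU: "U ** cadj U = mat 1" using matrix_left_right_inverse by blast
  have "v = (U ** cadj U) *v v" using UU by simp
  also have "\<dots> = U *v (cadj U *v v)" by (simp add: matrix_vector_mul_assoc)
  also have "\<dots> = braket p1 v *s p1 + braket p2 v *s p2"
    by (simp add: vec_eq_iff U_def cadj_def matrix_vector_mult_def sum_2 braket_def forall_2 algebra_simps)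
  finally show ?thesis .
qed


definition umat :: "cvec2 \<Rightarrow> cvec2 \<Rightarrow> cmat2" where
 "umat p1 p2 = (\<chi> i j. if j = 1 then p1 $ i else p2 $ i)"

lemma UU:
  assumes "braket p1 p1 = 1" "braket p2 p2 = 1" "braket p1 p2 = 0"
  shows "umat p1 p2 ** cadj (umat p1 p2) = mat 1"
proof -
  have h21: "braket p2 p1 = 0" using assms(3) braket_cnj by (metis complex_cnj_zero)
  have "cadj (umat p1 p2) ** umat p1 p2 = mat 1"
    using assms h21 unfolding vec_eq_iff
    by (auto simp: umat_def cadj_def matrix_matrix_mult_def mat_def sum_2 braket_def forall_2)
  thus ?thesis using matrix_left_right_inverse by blast
qed

lemma trace_basis:
  assumes "braket p1 p1 = 1" "braket p2 p2 = 1" "braket p1 p2 = 0"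
  shows "mtrace A = braket p1 (A *v p1) + braket p2 (A *v p2)"
proof -
  have "mtrace A = mtrace (A ** (umat p1 p2 ** cadj (umat p1 p2)))"
    using UU[OF assms] by simp
  also have "\<dots> = braket p1 (A *v p1) + braket p2 (A *v p2)"
    by (simp add: mtrace_def umat_def cadj_def matrix_matrix_mult_def matrix_vector_mult_def sum_2 braket_def algebra_simps)
  finally show ?thesis .
qed

lemma insert_basis:
  assumes "braket p1 p1 = 1" "braket p2 p2 = 1" "braket p1 p2 = 0"
  shows "braket u ((A ** B) *v v) = braket u (A *v p1) * braket p1 (B *v v) + braket u (A *v p2) * braket p2 (B *v v)"
proof -
  have "(A ** B) *v v = A *v (B *v v)" by (simp add: matrix_vector_mul_assoc)
  also have "B *v v = braket p1 (B *v v) *s p1 + braket p2 (B *v v) *s p2"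
    by (rule complete[OF assms])
  finally show ?thesis
    by (simp add: matrix_vector_right_distrib vector_scalar_commute braket_add braket_smult mult.commute)
qed


lemma braket_smult_left: "braket (c *s u) w = cnj c * braket u w"
  by (simp add: braket_def sum_2 algebra_simps)

lemma eig_left:
  assumes "hermitian \<rho>" "\<rho> *v p = complex_of_real l *s p"
  shows "braket p (\<rho> *v w) = of_real l * braket p w"
  using assms by (simp add: braket_adj[of p \<rho> w] hermitian_def braket_smult_left)

lemma zeta_formula:
  assumes "hermitian \<rho>" "eig_decomp \<rho> l1 l2 p1 p2"
  shows "zeta s \<rho> l1 l2 p1 p2 X Y =
    of_real (l1 - pmean s l1 l1) * braket p1 (cadj X *v p1) * braket p1 (Y *v p1)
  + of_real (l1 - pmean s l1 l2) * braket p1 (cadj X *v p2) * braket p2 (Y *v p1)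
  + of_real (l2 - pmean s l2 l1) * braket p2 (cadj X *v p1) * braket p1 (Y *v p2)
  + of_real (l2 - pmean s l2 l2) * braket p2 (cadj X *v p2) * braket p2 (Y *v p2)"
proof -
  note e = assms(2)[unfolded eig_decomp_def]
  have o: "braket p1 p1 = 1" "braket p2 p2 = 1" "braket p1 p2 = 0" using e by auto
  have tr: "mtrace (\<rho> ** cadj X ** Y) = 
     of_real l1 * (braket p1 (cadj X *v p1) * braket p1 (Y *v p1) + braket p1 (cadj X *v p2) * braket p2 (Y *v p1))
   + of_real l2 * (braket p2 (cadj X *v p1) * braket p1 (Y *v p2) + braket p2 (cadj X *v p2) * braket p2 (Y *v p2))"
    apply (subst trace_basis[OF o])
    apply (simp only: matrix_mul_assoc[symmetric] matrix_vector_mul_assoc[symmetric])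
    apply (simp only: eig_left[OF assms(1), of p1 l1] eig_left[OF assms(1), of p2 l2] e)
    apply (simp add: matrix_vector_mul_assoc insert_basis[OF o])
    done
  show ?thesis
    unfolding zeta_def Let_def tr
    by (simp add: algebra_simps)
qed


lemma pmean_sym: "pmean s a b = pmean s b a"
  by (simp add: pmean_def add.commute min.commute mult.commute)

lemma pmean_diag: assumes "l \<ge> 0" "s \<le> 0" shows "pmean s l l = l"
proof (cases "l = 0 \<or> s = -\<infinity> \<or> s = 0")
  case True thus ?thesis using assms by (auto simp: pmean_def)
next
  case False
  then obtain r where r: "s = ereal r" "r < 0" using assms
    by (cases s) auto
  have "(l powr r) powr (1/r) = l" using False assms r by (simp add: powr_powr)
  thus ?thesis using False r by (simp add: pmean_def)
qed

lemma pmean_bounds: assumes "0 \<le> l2" "l2 \<le> l1" "s \<le> 0"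
  shows "l2 \<le> pmean s l1 l2 \<and> pmean s l1 l2 \<le> l1"
proof (cases "l2 = 0 \<or> s = -\<infinity> \<or> s = 0")
  case True thus ?thesis using assms
    by (auto simp: pmean_def real_sqrt_le_iff power2_eq_square intro!: real_le_rsqrt real_le_lsqrt mult_left_mono mult_right_mono)
next
  case False
  then obtain r where r: "s = ereal r" "r < 0" using assms
    by (cases s) auto
  have l1p: "l1 > 0" "l2 > 0" using False assms by auto
  have a: "l1 powr r \<le> l2 powr r" using r l1p assms by (intro powr_mono2') auto
  define M where "M = (l1 powr r + l2 powr r) / 2"
  have M1: "l1 powr r \<le> M" "M \<le> l2 powr r" using a by (auto simp: M_def)
  have M0: "0 < M" proof -
    have "0 < l1 powr r" using l1p by simp
    thus ?thesis using M1(1) by linarith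
  qed
  have "M powr (1/r) \<le> (l1 powr r) powr (1/r)" using M1 M0 r l1p by (intro powr_mono2') auto
  also have "\<dots> = l1" using r l1p by (simp add: powr_powr)
  finally have u: "M powr (1/r) \<le> l1" .
  have "l2 = (l2 powr r) powr (1/r)" using r l1p by (simp add: powr_powr)
  also have "\<dots> \<le> M powr (1/r)" using M1 M0 r l1p by (intro powr_mono2') auto
  finally have d: "l2 \<le> M powr (1/r)" .
  show ?thesis using u d False r l1p by (simp add: pmean_def M_def)
qed

lemma alg:
  fixes z w :: complex and a b :: real
  defines "I \<equiv> (\<lambda>u. of_real a * u * cnj u + of_real b * cnj u * u)"
  shows "Im (I z * I w - (1/16) * (I (z + w) - I (z - w))\<^sup>2) = 0
     \<and> Re (I z * I w - (1/16) * (I (z + w) - I (z - w))\<^sup>2) = (a+b)\<^sup>2 * (Im z * Re w - Re z * Im w)\<^sup>2"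
proof -
  have Iu: "I u = of_real ((a+b) * ((Re u)\<^sup>2 + (Im u)\<^sup>2))" for u
    unfolding I_def by (simp add: complex_eq_iff power2_eq_square algebra_simps)
  define R where "R u = (a+b) * ((Re u)\<^sup>2 + (Im u)\<^sup>2)" for u
  have e1: "I z * I w - (1/16) * (I (z + w) - I (z - w))\<^sup>2 = of_real (R z * R w - (1/16) * (R (z+w) - R (z-w))\<^sup>2)"
    unfolding Iu R_def[symmetric] by simp
  have e2: "R z * R w - (1/16) * (R (z+w) - R (z-w))\<^sup>2 = (a+b)\<^sup>2 * (Im z * Re w - Re z * Im w)\<^sup>2"
    unfolding R_def by (simp add: power2_eq_square algebra_simps)
  show ?thesis unfolding e1 e2 by simp
qed

lemma alg2:
  fixes z w :: complex and l1 l2 :: real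
  shows "(cmod (of_real l1 * (z * cnj w - w * cnj z) + of_real l2 * (cnj z * w - cnj w * z)))\<^sup>2
     = 4 * (l1 - l2)\<^sup>2 * (Im z * Re w - Re z * Im w)\<^sup>2"
  (is "(cmod ?T)\<^sup>2 = _")
proof -
  have "(cmod ?T)\<^sup>2 = (Re ?T)\<^sup>2 + (Im ?T)\<^sup>2" by (rule cmod_power2)
  also have "Re ?T = 0" by (simp add: algebra_simps)
  also have "Im ?T = 2 * (l1 - l2) * (Im z * Re w - Re z * Im w)" by (simp add: algebra_simps)
  finally show ?thesis by (simp add: power2_eq_square algebra_simps)
qed


lemma herm_swap: assumes "hermitian H" shows "braket p2 (H *v p1) = cnj (braket p1 (H *v p2))"
  using assms by (simp add: braket_adj[of p2 H p1] hermitian_def braket_cnj[of "H *v p2" p1])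

lemma Iinfo_formula:
  assumes "hermitian \<rho>" "eig_decomp \<rho> l1 l2 p1 p2" "hermitian H" "s \<le> 0"
  shows "Iinfo s \<rho> l1 l2 p1 p2 H = of_real (l1 - pmean s l1 l2) * braket p1 (H *v p2) * cnj (braket p1 (H *v p2))
     + of_real (l2 - pmean s l1 l2) * cnj (braket p1 (H *v p2)) * braket p1 (H *v p2)"
proof -
  note e = assms(2)[unfolded eig_decomp_def]
  have "l1 \<ge> 0" using e by auto
  then show ?thesis
    unfolding Iinfo_def zeta_formula[OF assms(1,2)]
    using assms(3) e
    by (simp add: hermitian_def pmean_diag[OF _ assms(4)] herm_swap[OF assms(3), of p2 p1] pmean_sym[of s l2 l1])
qed

lemma trace_comm:
  assumes "hermitian \<rho>" "eig_decomp \<rho> l1 l2 p1 p2" "hermitian X" "hermitian Y"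
  shows "mtrace (\<rho> ** commutator X Y) = of_real l1 * (braket p1 (X *v p2) * cnj (braket p1 (Y *v p2)) - braket p1 (Y *v p2) * cnj (braket p1 (X *v p2)))
     + of_real l2 * (cnj (braket p1 (X *v p2)) * braket p1 (Y *v p2) - cnj (braket p1 (Y *v p2)) * braket p1 (X *v p2))"
proof -
  note e = assms(2)[unfolded eig_decomp_def]
  have o: "braket p1 p1 = 1" "braket p2 p2 = 1" "braket p1 p2 = 0" using e by auto
  show ?thesis
    apply (subst trace_basis[OF o])
    apply (simp only: matrix_vector_mul_assoc[symmetric])
    apply (simp only: eig_left[OF assms(1), of p1 l1] eig_left[OF assms(1), of p2 l2] e)
    apply (simp add: commutator_def matrix_vector_mult_diff_rdistrib braket_diff insert_basis[OF o]
       herm_swap[OF assms(3), of p2 p1] herm_swap[OF assms(4), of p2 p1])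
    done
qed

theorem corollary1:
  fixes s :: ereal and \<rho> X Y :: "complex^2^2" and l1 l2 :: real and p1 p2 :: "complex^2"
  assumes "-\<infinity> \<le> s" and "s \<le> 0"
    and "density_matrix \<rho>"
    and "hermitian X" and "hermitian Y"
    and "eig_decomp \<rho> l1 l2 p1 p2"
  shows "Im (calI s \<rho> l1 l2 p1 p2 X Y) = 0
       \<and> 0 \<le> Re (calI s \<rho> l1 l2 p1 p2 X Y)
       \<and> Re (calI s \<rho> l1 l2 p1 p2 X Y) \<le> (1/4) * (cmod (mtrace (\<rho> ** commutator X Y)))\<^sup>2"
proof -
  have hr: "hermitian \<rho>" using assms(3) by (simp add: density_matrix_def psd_def)
  note e = assms(6)[unfolded eig_decomp_def]
  define m where "m = pmean s l1 l2"
  define z where "z = braket p1 (X *v p2)"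
  define w where "w = braket p1 (Y *v p2)"
  define Q where "Q = Im z * Re w - Re z * Im w"
  have hp: "hermitian (X + Y)" "hermitian (X - Y)" using assms(4,5)
    by (simp_all add: hermitian_def cadj_add cadj_diff)
  have zp: "braket p1 ((X + Y) *v p2) = z + w" "braket p1 ((X - Y) *v p2) = z - w"
    by (simp_all add: z_def w_def matrix_vector_mult_add_rdistrib matrix_vector_mult_diff_rdistrib braket_add braket_diff)
  let ?I = "\<lambda>u. of_real (l1 - m) * u * cnj u + of_real (l2 - m) * cnj u * u"
  have cI: "calI s \<rho> l1 l2 p1 p2 X Y = ?I z * ?I w - (1/16) * (?I (z + w) - ?I (z - w))\<^sup>2"
    unfolding calI_def
    using Iinfo_formula[OF hr assms(6) assms(4) assms(2)] Iinfo_formula[OF hr assms(6) assms(5) assms(2)]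
      Iinfo_formula[OF hr assms(6) hp(1) assms(2)] Iinfo_formula[OF hr assms(6) hp(2) assms(2)]
    by (simp add: zp m_def z_def w_def)
  have A: "Im (calI s \<rho> l1 l2 p1 p2 X Y) = 0 \<and> Re (calI s \<rho> l1 l2 p1 p2 X Y) = ((l1 - m) + (l2 - m))\<^sup>2 * Q\<^sup>2"
    unfolding cI Q_def by (rule alg)
  have T: "(cmod (mtrace (\<rho> ** commutator X Y)))\<^sup>2 = 4 * (l1 - l2)\<^sup>2 * Q\<^sup>2"
    unfolding trace_comm[OF hr assms(6,4,5)] z_def[symmetric] w_def[symmetric] Q_def by (rule alg2)
  have mb: "l2 \<le> m" "m \<le> l1" using pmean_bounds[of l2 l1 s] e assms(2) by (auto simp: m_def)
  have "((l1 - m) + (l2 - m))\<^sup>2 \<le> (l1 - l2)\<^sup>2"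
    using mb by (intro power2_le_iff_abs_le[THEN iffD2]) auto
  hence "((l1 - m) + (l2 - m))\<^sup>2 * Q\<^sup>2 \<le> (l1 - l2)\<^sup>2 * Q\<^sup>2"
    by (intro mult_right_mono) auto
  thus ?thesis using A T by simp
qed

end
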